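(* Consider economies with individual endowments and single-peaked preferences. A rule on this domain satisfies own-peak-onliness, efficiency, the endowments guarantee, and not obvious manipulability (NOM) if and only if it is a simple reallocation rule.
   Context: Let $N=\{1,\dots,n\}$ be a finite set of agents. A preference $R_i$ is a continuous complete preorder on $\mathbb{R}_+\cup\{\infty\}$ ($P_i$ strict, $I_i$ indifference); its peak $p(R_i)$ is the set of maximal elements. $R_i$ is single-peaked if $p(R_i)$ is a singleton (identified with its element) and for $x,x'\in\mathbb{R}_+$, $xP_ix'$ whenever $x'<x\le p(R_i)$ or $p(R_i)\le x<x'$; $\mathcal{SP}$ is the set of these. An economy is $(R,\omega)$ with $R\in\mathcal{SP}^n$ and an endowment profile $\omega=(\omega_i)_{i\in N}\in\mathbb{R}^n_+$ with $\Omega=\sum_j\omega_j>0$. A rule assigns to each economy $\varphi(R,\omega)\in\mathbb{R}^n_+$ with $\sum_j\varphi_j(R,\omega)=\Omega$. Properties: Efficiency: no $x\in\mathbb{R}^n_+$ with $\sum_jx_j=\Omega$ has $x_iR_i\varphi_i(R,\omega)$ for all $i$ and $x_iP_i\varphi_i(R,\omega)$ for some $i$. Own-peak-onliness: $p(R_i')=p(R_i)$ implies $\varphi_i(R,\omega)=\varphi_i(R_i',R_{-i},\omega)$. Endowments guarantee: $p(R_i)=\omega_i$ implies $\varphi_i(R,\omega)I_i\omega_i$. Option set $O^\varphi(R_i,\omega)=\{\varphi_i(R_i,R_{-i},\omega):R_{-i}\in\mathcal{SP}^{n-1}\}$; $R_i'$ is a manipulation at $(R_i,\omega)$ if $\varphi_i(R_i',R_{-i},\omega)P_i\varphi_i(R_i,R_{-i},\omega)$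 for some $R_{-i}$, and an obvious manipulation if moreover each $x'\in O^\varphi(R_i',\omega)$ satisfies $x'P_ix$ for some $x\in O^\varphi(R_i,\omega)$; NOM means there is no obvious manipulation. Simple reallocation rule: let $z(R,\omega)=\sum_jp(R_j)-\Omega$; agent $i$ is simple if ($z\ge0$ and $p(R_i)<\omega_i$) or ($z\le0$ and $p(R_i)>\omega_i$). An own-peak-only rule is a simple reallocation rule if for every economy it assigns to each simple agent his peak $p(R_i)$ and to each non-simple agent an amount in the closed interval between $\omega_i$ and $p(R_i)$. *)

theory Defs
  imports "HOL-Library.Extended_Nonnegative_Real"
begin

type_synonym pref = "ennreal \<Rightarrow> ennreal \<Rightarrow> bool"

definition complete_preorder :: "pref \<Rightarrow> bool" where
  "complete_preorder R \<longleftrightarrow> (\<forall>x y. R x y \<or> R y x) \<and> (\<forall>x y z. R x y \<longrightarrow> R y z \<longrightarrow> R x z)"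

definition continuous_pref :: "pref \<Rightarrow> bool" where
  "continuous_pref R \<longleftrightarrow> (\<forall>x. closed {y. R y x} \<and> closed {y. R x y})"

definition strict :: "pref \<Rightarrow> ennreal \<Rightarrow> ennreal \<Rightarrow> bool" where
  "strict R x y \<longleftrightarrow> R x y \<and> \<not> R y x"

definition indiff :: "pref \<Rightarrow> ennreal \<Rightarrow> ennreal \<Rightarrow> bool" where
  "indiff R x y \<longleftrightarrow> R x y \<and> R y x"

definition peakset :: "pref \<Rightarrow> ennreal set" where
  "peakset R = {x. \<forall>y. R x y}"

definition peak :: "pref \<Rightarrow> ennreal" where
  "peak R = (THE a. peakset R = {a})"

definition single_peaked :: "pref \<Rightarrow> bool" where
  "single_peaked R \<longleftrightarrow> complete_preorder R \<and> continuous_pref R \<and>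
     (\<exists>a. peakset R = {a} \<and>
        (\<forall>x x'. x \<noteq> \<infinity> \<longrightarrow> x' \<noteq> \<infinity> \<longrightarrow>
            ((x' < x \<and> x \<le> a) \<or> (a \<le> x \<and> x < x')) \<longrightarrow> strict R x x'))"

definition endowment_profile :: "('n::finite \<Rightarrow> real) \<Rightarrow> bool" where
  "endowment_profile \<omega> \<longleftrightarrow> (\<forall>i. 0 \<le> \<omega> i) \<and> sum \<omega> UNIV > 0"

definition economy :: "('n::finite \<Rightarrow> pref) \<Rightarrow> ('n \<Rightarrow> real) \<Rightarrow> bool" where
  "economy R \<omega> \<longleftrightarrow> (\<forall>i. single_peaked (R i)) \<and> endowment_profile \<omega>"

type_synonym 'n rule = "('n \<Rightarrow> pref) \<Rightarrow> ('n \<Rightarrow> real) \<Rightarrow> 'n \<Rightarrow> real"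

definition is_rule :: "('n::finite) rule \<Rightarrow> bool" where
  "is_rule \<phi> \<longleftrightarrow> (\<forall>R \<omega>. economy R \<omega> \<longrightarrow>
      (\<forall>i. 0 \<le> \<phi> R \<omega> i) \<and> sum (\<phi> R \<omega>) UNIV = sum \<omega> UNIV)"

definition efficient :: "('n::finite) rule \<Rightarrow> bool" where
  "efficient \<phi> \<longleftrightarrow> (\<forall>R \<omega>. economy R \<omega> \<longrightarrow>
      \<not> (\<exists>x::'n \<Rightarrow> real. (\<forall>i. 0 \<le> x i) \<and> sum x UNIV = sum \<omega> UNIV \<and>
            (\<forall>i. R i (ennreal (x i)) (ennreal (\<phi> R \<omega> i))) \<and>
            (\<exists>i. strict (R i) (ennreal (x i)) (ennreal (\<phi> R \<omega> i)))))"

definition own_peak_only :: "('n::finite) rule \<Rightarrow> bool" where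
  "own_peak_only \<phi> \<longleftrightarrow> (\<forall>R \<omega> i Ri'. economy R \<omega> \<longrightarrow> single_peaked Ri' \<longrightarrow>
      peakset Ri' = peakset (R i) \<longrightarrow> \<phi> R \<omega> i = \<phi> (R(i := Ri')) \<omega> i)"

definition endowments_guarantee :: "('n::finite) rule \<Rightarrow> bool" where
  "endowments_guarantee \<phi> \<longleftrightarrow> (\<forall>R \<omega> i. economy R \<omega> \<longrightarrow> peak (R i) = ennreal (\<omega> i) \<longrightarrow>
      indiff (R i) (ennreal (\<phi> R \<omega> i)) (ennreal (\<omega> i)))"

definition option_set :: "('n::finite) rule \<Rightarrow> 'n \<Rightarrow> pref \<Rightarrow> ('n \<Rightarrow> real) \<Rightarrow> real set" where
  "option_set \<phi> i Ri \<omega> = {\<phi> R \<omega> i | R. (\<forall>j. single_peaked (R j)) \<and> R i = Ri}"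

definition manipulation :: "('n::finite) rule \<Rightarrow> 'n \<Rightarrow> pref \<Rightarrow> pref \<Rightarrow> ('n \<Rightarrow> real) \<Rightarrow> bool" where
  "manipulation \<phi> i Ri Ri' \<omega> \<longleftrightarrow> (\<exists>R. (\<forall>j. single_peaked (R j)) \<and> R i = Ri \<and>
      strict Ri (ennreal (\<phi> (R(i := Ri')) \<omega> i)) (ennreal (\<phi> R \<omega> i)))"

definition obvious_manipulation :: "('n::finite) rule \<Rightarrow> 'n \<Rightarrow> pref \<Rightarrow> pref \<Rightarrow> ('n \<Rightarrow> real) \<Rightarrow> bool" where
  "obvious_manipulation \<phi> i Ri Ri' \<omega> \<longleftrightarrow> manipulation \<phi> i Ri Ri' \<omega> \<and>
      (\<forall>x'\<in>option_set \<phi> i Ri' \<omega>. \<exists>x\<in>option_set \<phi> i Ri \<omega>. strict Ri (ennreal x') (ennreal x))"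

definition NOM :: "('n::finite) rule \<Rightarrow> bool" where
  "NOM \<phi> \<longleftrightarrow> (\<forall>\<omega> i Ri Ri'. endowment_profile \<omega> \<longrightarrow> single_peaked Ri \<longrightarrow> single_peaked Ri' \<longrightarrow>
      \<not> obvious_manipulation \<phi> i Ri Ri' \<omega>)"

text \<open>z(R,omega) \<ge> 0 iff the sum of peaks is at least Omega (computed in ennreal,
  since peaks may be \<infinity>).\<close>
definition simple_agent :: "('n::finite \<Rightarrow> pref) \<Rightarrow> ('n \<Rightarrow> real) \<Rightarrow> 'n \<Rightarrow> bool" where
  "simple_agent R \<omega> i \<longleftrightarrow>
     ((\<Sum>j\<in>UNIV. peak (R j)) \<ge> ennreal (sum \<omega> UNIV) \<and> peak (R i) < ennreal (\<omega> i)) \<or>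
     ((\<Sum>j\<in>UNIV. peak (R j)) \<le> ennreal (sum \<omega> UNIV) \<and> peak (R i) > ennreal (\<omega> i))"

definition simple_reallocation_rule :: "('n::finite) rule \<Rightarrow> bool" where
  "simple_reallocation_rule \<phi> \<longleftrightarrow> own_peak_only \<phi> \<and>
     (\<forall>R \<omega>. economy R \<omega> \<longrightarrow> (\<forall>i.
        (simple_agent R \<omega> i \<longrightarrow> ennreal (\<phi> R \<omega> i) = peak (R i)) \<and>
        (\<not> simple_agent R \<omega> i \<longrightarrow>
           min (ennreal (\<omega> i)) (peak (R i)) \<le> ennreal (\<phi> R \<omega> i) \<and>
           ennreal (\<phi> R \<omega> i) \<le> max (ennreal (\<omega> i)) (peak (R i)))))"

end

theory Submission
  imports Defs
begin

definition vg :: "real \<Rightarrow> real \<Rightarrow> real \<Rightarrow> ennreal \<Rightarrow> ennreal" where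
  "vg q c1 c2 x = ennreal c1 * (ennreal q - min x (ennreal q)) + ennreal c2 * x"

definition vpref :: "real \<Rightarrow> real \<Rightarrow> real \<Rightarrow> pref" where
  "vpref q c1 c2 = (\<lambda>x y. vg q c1 c2 x \<le> vg q c1 c2 y)"

lemma vg_real:
  assumes "0 \<le> r" "0 \<le> q" "0 \<le> c1" "0 \<le> c2"
  shows "vg q c1 c2 (ennreal r) = ennreal (c1 * max (q - r) 0 + c2 * r)"
proof -
  have "min (ennreal r) (ennreal q) = ennreal (min r q)"
    using assms by (cases "r \<le> q") (auto simp: min_def)
  then have "ennreal q - min (ennreal r) (ennreal q) = ennreal (max (q - r) 0)"
    using assms by (simp add: ennreal_minus_if max_def)
  then show ?thesis using assms
    by (simp add: vg_def ennreal_mult[symmetric])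
qed

lemma vg_top: "0 < c2 \<Longrightarrow> vg q c1 c2 top = top"
  by (simp add: vg_def ennreal_mult_top)

lemma vg_cont: "0 \<le> c1 \<Longrightarrow> 0 \<le> c2 \<Longrightarrow> continuous_on UNIV (vg q c1 c2)"
  unfolding vg_def
  apply (intro continuous_on_add_ennreal ennreal_continuous_on_cmult continuous_on_diff_ennreal
      continuous_on_min continuous_on_const continuous_on_id)
  apply (auto simp: min_def top_unique)
  done

lemma vpref_sp:
  assumes "0 \<le> q" "0 < c2" "c2 < c1"
  shows "single_peaked (vpref q c1 c2)" "peakset (vpref q c1 c2) = {ennreal q}"
proof -
  let ?g = "vg q c1 c2"
  have fin: "\<And>x. x \<noteq> top \<Longrightarrow> \<exists>r. 0 \<le> r \<and> x = ennreal r"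
    by (metis ennreal_cases)
  have gless: "?g (ennreal q) < ?g x" if "x \<noteq> ennreal q" for x
  proof (cases "x = top")
    case True then show ?thesis using assms by (simp add: vg_top vg_real)
  next
    case False
    then obtain r where r: "0 \<le> r" "x = ennreal r" using fin by blast
    with that have "r \<noteq> q" by auto
    have "c2 * q < c1 * max (q - r) 0 + c2 * r"
    proof (cases "r < q")
      case True
      have "0 < (c1 - c2) * (q - r)" using True assms by simp
      then show ?thesis using True by (simp add: max_def algebra_simps)
    next
      case False
      then have "q < r" using \<open>r \<noteq> q\<close> by simp
      then have "c2 * q < c2 * r" using assms by simp
      then show ?thesis using False by (simp add: max_def)
    qed
    then show ?thesis using assms r by (simp add: vg_real ennreal_less_iff del: ennreal_plus)
  qed
  have pk: "peakset (vpref q c1 c2) = {ennreal q}"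
  proof -
    have "vg q c1 c2 (ennreal q) \<le> vg q c1 c2 y" for y
      using gless[of y] by (cases "y = ennreal q") auto
    moreover have "x = ennreal q" if "\<forall>y. vg q c1 c2 x \<le> vg q c1 c2 y" for x
      using that gless[of x] by (metis not_le)
    ultimately show ?thesis unfolding peakset_def vpref_def by blast
  qed
  show "peakset (vpref q c1 c2) = {ennreal q}" by (rule pk)
  have mono: "strict (vpref q c1 c2) x x'" if xx: "x \<noteq> \<infinity>" "x' \<noteq> \<infinity>"
     "(x' < x \<and> x \<le> ennreal q) \<or> (ennreal q \<le> x \<and> x < x')" for x x'
  proof -
    obtain r where r: "0 \<le> r" "x = ennreal r" using fin xx(1) by auto
    obtain r' where r': "0 \<le> r'" "x' = ennreal r'" using fin xx(2) by auto
    have "(r' < r \<and> r \<le> q) \<or> (q \<le> r \<and> r < r')" using xx(3) r r' assms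
      by (auto simp: ennreal_less_iff)
    then have "c1 * max (q - r) 0 + c2 * r < c1 * max (q - r') 0 + c2 * r'"
    proof
      assume h: "r' < r \<and> r \<le> q"
      have "0 < (c1 - c2) * (r - r')" using h assms by simp
      moreover have "max (q - r) 0 = q - r" "max (q - r') 0 = q - r'" using h by auto
      ultimately show ?thesis by (simp add: algebra_simps)
    next
      assume h: "q \<le> r \<and> r < r'"
      have "c2 * r < c2 * r'" using h assms by simp
      moreover have "0 \<le> c1 * max (q - r') 0" using assms by simp
      ultimately show ?thesis using h by (simp add: max_def)
    qed
    then show ?thesis using assms r r' unfolding strict_def vpref_def
      by (simp add: vg_real ennreal_less_iff del: ennreal_plus)
  qed
  show "single_peaked (vpref q c1 c2)"
    unfolding single_peaked_def
  proof (intro conjI)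
    show "complete_preorder (vpref q c1 c2)"
      unfolding complete_preorder_def vpref_def by auto
    show "continuous_pref (vpref q c1 c2)"
      unfolding continuous_pref_def vpref_def
      using vg_cont[of c1 c2 q] assms
      by (auto intro!: closed_Collect_le continuous_on_const)
    show "\<exists>a. peakset (vpref q c1 c2) = {a} \<and>
        (\<forall>x x'. x \<noteq> \<infinity> \<longrightarrow> x' \<noteq> \<infinity> \<longrightarrow>
            ((x' < x \<and> x \<le> a) \<or> (a \<le> x \<and> x < x')) \<longrightarrow> strict (vpref q c1 c2) x x')"
      using pk mono by blast
  qed
qed

lemma vpref_peak: "0 \<le> q \<Longrightarrow> 0 < c2 \<Longrightarrow> c2 < c1 \<Longrightarrow> peak (vpref q c1 c2) = ennreal q"
  using vpref_sp(2) unfolding peak_def by simp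

lemma sp_basic:
  assumes "single_peaked R"
  shows "peakset R = {peak R}"
    "\<And>x x'. x \<noteq> \<infinity> \<Longrightarrow> x' \<noteq> \<infinity> \<Longrightarrow> (x' < x \<and> x \<le> peak R) \<or> (peak R \<le> x \<and> x < x') \<Longrightarrow> strict R x x'"
    "\<And>x. R x x" "\<And>x y. R x y \<or> R y x" "\<And>x y z. R x y \<Longrightarrow> R y z \<Longrightarrow> R x z"
proof -
  obtain a where a: "peakset R = {a}"
    "\<And>x x'. x \<noteq> \<infinity> \<Longrightarrow> x' \<noteq> \<infinity> \<Longrightarrow> (x' < x \<and> x \<le> a) \<or> (a \<le> x \<and> x < x') \<Longrightarrow> strict R x x'"
    using assms unfolding single_peaked_def by blast
  have pa: "peak R = a" using a(1) unfolding peak_def by simp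
  show "peakset R = {peak R}" using a pa by simp
  show "\<And>x x'. x \<noteq> \<infinity> \<Longrightarrow> x' \<noteq> \<infinity> \<Longrightarrow> (x' < x \<and> x \<le> peak R) \<or> (peak R \<le> x \<and> x < x') \<Longrightarrow> strict R x x'"
    using a pa by blast
  show "\<And>x y. R x y \<or> R y x" "\<And>x y z. R x y \<Longrightarrow> R y z \<Longrightarrow> R x z"
    using assms unfolding single_peaked_def complete_preorder_def by blast+
  then show "\<And>x. R x x" by blast
qed

lemma sp_peak_best: "single_peaked R \<Longrightarrow> R (peak R) y"
  using sp_basic(1)[of R] unfolding peakset_def by blast

lemma sp_weak:
  assumes "single_peaked R" "0 \<le> x" "0 \<le> y"
    "(peak R \<le> ennreal x \<and> x \<le> y) \<or> (y \<le> x \<and> ennreal x \<le> peak R)"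
  shows "R (ennreal x) (ennreal y)"
proof (cases "x = y")
  case True then show ?thesis using sp_basic(3)[OF assms(1)] by simp
next
  case False
  then have "(ennreal y < ennreal x \<and> ennreal x \<le> peak R) \<or> (peak R \<le> ennreal x \<and> ennreal x < ennreal y)"
    using assms by (auto simp: ennreal_less_iff)
  then have "strict R (ennreal x) (ennreal y)" using sp_basic(2)[OF assms(1)] by simp
  then show ?thesis unfolding strict_def by simp
qed

lemma economy_upd: "economy R \<omega> \<Longrightarrow> single_peaked R' \<Longrightarrow> economy (R(i := R')) \<omega>"
  unfolding economy_def by auto

lemma ennreal_sum_strict:
  fixes f g :: "'a \<Rightarrow> ennreal"
  assumes "finite A" "j \<in> A" "\<And>k. k \<in> A \<Longrightarrow> f k \<le> g k" "f j < g j" "sum g A < top"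
  shows "sum f A < sum g A"
proof -
  have s1: "sum f A = f j + sum f (A - {j})" "sum g A = g j + sum g (A - {j})"
    using assms(1,2) by (simp_all add: sum.remove)
  have le: "sum f (A - {j}) \<le> sum g (A - {j})" using assms(3) by (intro sum_mono) auto
  have "sum g (A - {j}) \<le> sum g A" using s1(2) by simp
  then have fin: "sum g (A - {j}) \<noteq> top" using assms(5) by (auto simp: top_unique)
  have "f j + sum f (A - {j}) \<le> f j + sum g (A - {j})" using le by (simp add: add_left_mono)
  also have "\<dots> < g j + sum g (A - {j})"
    using fin assms(4) ennreal_add_left_cancel_less[of "sum g (A - {j})" "f j" "g j"]
    by (simp add: add.commute)
  finally show ?thesis using s1 by simp
qed

lemma transfer_contra:
  fixes \<phi> :: "('n::finite) rule"
  assumes rule: "is_rule \<phi>" and eff: "efficient \<phi>" and ec: "economy R \<omega>"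
    and j: "peak (R j) < ennreal (\<phi> R \<omega> j)" and k: "ennreal (\<phi> R \<omega> k) < peak (R k)"
  shows False
proof -
  define a where "a = \<phi> R \<omega>"
  have a0: "\<And>l. 0 \<le> a l" and asum: "sum a UNIV = sum \<omega> UNIV"
    using rule ec unfolding is_rule_def a_def by auto
  have sp: "\<And>l. single_peaked (R l)" using ec unfolding economy_def by auto
  have "peak (R j) \<noteq> top" using j by (auto simp: top_unique)
  then obtain qj where qj: "peak (R j) = ennreal qj" "0 \<le> qj" by (cases "peak (R j)") auto
  have qja: "qj < a j" using j qj a0 unfolding a_def by (simp add: ennreal_less_iff)
  have jk: "j \<noteq> k" using j k by (metis order.strict_trans not_less_iff_gr_or_eq)
  obtain e where e: "0 < e" "e \<le> a j - qj" "ennreal (a k + e) \<le> peak (R k)"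
  proof (cases "peak (R k) = top")
    case True then show ?thesis using that[of "a j - qj"] qja by simp
  next
    case False
    then obtain qk where qk: "peak (R k) = ennreal qk" "0 \<le> qk" by (cases "peak (R k)") auto
    have "a k < qk" using k qk a0 unfolding a_def by (simp add: ennreal_less_iff)
    then show ?thesis using that[of "min (a j - qj) (qk - a k)"] qja qk by auto
  qed
  define x where "x l = a l + (if l = k then e else 0) - (if l = j then e else 0)" for l
  have xj: "x j = a j - e" and xk: "x k = a k + e" and xl: "\<And>l. l \<noteq> j \<Longrightarrow> l \<noteq> k \<Longrightarrow> x l = a l"
    using jk by (auto simp: x_def)
  have x0: "\<forall>l. 0 \<le> x l" using a0 e qj qja jk by (auto simp: x_def)
  have xsum: "sum x UNIV = sum \<omega> UNIV"
    unfolding x_def using asum by (simp add: sum.distrib sum_subtractf sum.delta)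
  have sj: "strict (R j) (ennreal (x j)) (ennreal (a j))"
  proof -
    have "peak (R j) \<le> ennreal (x j)" using qj xj e by simp
    moreover have "ennreal (x j) < ennreal (a j)" using xj e x0[rule_format, of j] by (simp add: ennreal_less_iff)
    ultimately show ?thesis using sp_basic(2)[OF sp[of j]] by simp
  qed
  have sk: "strict (R k) (ennreal (x k)) (ennreal (a k))"
  proof -
    have "ennreal (x k) \<le> peak (R k)" using e xk by simp
    moreover have "ennreal (a k) < ennreal (x k)" using xk e a0 by (simp add: ennreal_less_iff)
    ultimately show ?thesis using sp_basic(2)[OF sp[of k]] by simp
  qed
  have "\<forall>l. R l (ennreal (x l)) (ennreal (a l))"
  proof
    fix l show "R l (ennreal (x l)) (ennreal (a l))"
      using sj sk xl[of l] sp_basic(3)[OF sp[of l]] unfolding strict_def by (cases "l = j \<or> l = k") auto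
  qed
  then show False using eff ec x0 xsum sj unfolding efficient_def a_def by blast
qed

lemma eff_le_peak:
  fixes \<phi> :: "('n::finite) rule"
  assumes rule: "is_rule \<phi>" and eff: "efficient \<phi>" and ec: "economy R \<omega>"
    and S: "(\<Sum>j\<in>UNIV. peak (R j)) \<ge> ennreal (sum \<omega> UNIV)"
  shows "ennreal (\<phi> R \<omega> i) \<le> peak (R i)"
proof (rule ccontr)
  assume "\<not> ?thesis"
  then have i: "peak (R i) < ennreal (\<phi> R \<omega> i)" by simp
  have a0: "\<And>l. 0 \<le> \<phi> R \<omega> l" and asum: "sum (\<phi> R \<omega>) UNIV = sum \<omega> UNIV"
    using rule ec unfolding is_rule_def by auto
  show False
  proof (cases "\<exists>k. ennreal (\<phi> R \<omega> k) < peak (R k)")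
    case True then show False using transfer_contra[OF rule eff ec i] by blast
  next
    case False
    then have "\<And>k. k \<in> UNIV \<Longrightarrow> peak (R k) \<le> ennreal (\<phi> R \<omega> k)" by (simp add: not_less)
    from ennreal_sum_strict[of UNIV i "\<lambda>k. peak (R k)" "\<lambda>k. ennreal (\<phi> R \<omega> k)", OF _ _ this i]
    have "(\<Sum>j\<in>UNIV. peak (R j)) < (\<Sum>j\<in>UNIV. ennreal (\<phi> R \<omega> j))" using a0 by simp
    also have "\<dots> = ennreal (sum \<omega> UNIV)" using a0 asum by simp
    finally show False using S by simp
  qed
qed

lemma eff_ge_peak:
  fixes \<phi> :: "('n::finite) rule"
  assumes rule: "is_rule \<phi>" and eff: "efficient \<phi>" and ec: "economy R \<omega>"
    and S: "(\<Sum>j\<in>UNIV. peak (R j)) \<le> ennreal (sum \<omega> UNIV)"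
  shows "peak (R i) \<le> ennreal (\<phi> R \<omega> i)"
proof (rule ccontr)
  assume "\<not> ?thesis"
  then have i: "ennreal (\<phi> R \<omega> i) < peak (R i)" by simp
  have a0: "\<And>l. 0 \<le> \<phi> R \<omega> l" and asum: "sum (\<phi> R \<omega>) UNIV = sum \<omega> UNIV"
    using rule ec unfolding is_rule_def by auto
  show False
  proof (cases "\<exists>k. peak (R k) < ennreal (\<phi> R \<omega> k)")
    case True then show False using transfer_contra[OF rule eff ec _ i] by blast
  next
    case False
    then have le: "\<And>k. k \<in> UNIV \<Longrightarrow> ennreal (\<phi> R \<omega> k) \<le> peak (R k)" by (simp add: not_less)
    have fin: "(\<Sum>j\<in>UNIV. peak (R j)) < top"
      using S by (metis ennreal_less_top order.strict_trans1)
    from ennreal_sum_strict[of UNIV i "\<lambda>k. ennreal (\<phi> R \<omega> k)" "\<lambda>k. peak (R k)", OF _ _ le i fin]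
    have "(\<Sum>j\<in>UNIV. ennreal (\<phi> R \<omega> j)) < (\<Sum>j\<in>UNIV. peak (R j))" by simp
    moreover have "(\<Sum>j\<in>UNIV. ennreal (\<phi> R \<omega> j)) = ennreal (sum \<omega> UNIV)" using a0 asum by simp
    ultimately show False using S by simp
  qed
qed

lemma G_contra:
  fixes \<phi> :: "('n::finite) rule"
  assumes rule: "is_rule \<phi>" and opo: "own_peak_only \<phi>" and eg: "endowments_guarantee \<phi>"
    and nom: "NOM \<phi>" and ec: "economy R \<omega>" and sps: "single_peaked Rs"
    and pk: "peakset Rs = peakset (R i)"
    and st: "strict Rs (ennreal (\<omega> i)) (ennreal (\<phi> R \<omega> i))"
  shows False
proof -
  have ep: "endowment_profile \<omega>" using ec unfolding economy_def by simp
  have w0: "0 \<le> \<omega> i" using ep unfolding endowment_profile_def by simp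
  define Rw where "Rw = vpref (\<omega> i) 2 1"
  have spw: "single_peaked Rw" and pkw: "peak Rw = ennreal (\<omega> i)"
    and pksw: "peakset Rw = {ennreal (\<omega> i)}"
    using vpref_sp[of "\<omega> i" 1 2] vpref_peak[of "\<omega> i" 1 2] w0 unfolding Rw_def by auto
  have optw: "\<phi> R' \<omega> i = \<omega> i" if "\<forall>j. single_peaked (R' j)" and "R' i = Rw" for R'
  proof -
    have ec': "economy R' \<omega>" using that ep unfolding economy_def by simp
    then have ind: "indiff Rw (ennreal (\<phi> R' \<omega> i)) (ennreal (\<omega> i))"
      using eg pkw that(2) unfolding endowments_guarantee_def by metis
    have "Rw (ennreal (\<phi> R' \<omega> i)) y" for y
      using ind sp_peak_best[OF spw, of y] pkw sp_basic(5)[OF spw] unfolding indiff_def by metis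
    then have "ennreal (\<phi> R' \<omega> i) \<in> peakset Rw" unfolding peakset_def by blast
    then have "ennreal (\<phi> R' \<omega> i) = ennreal (\<omega> i)" using pksw by simp
    moreover have "0 \<le> \<phi> R' \<omega> i" using rule ec' unfolding is_rule_def by simp
    ultimately show ?thesis using w0 by simp
  qed
  have spR: "\<forall>j. single_peaked (R j)" using ec unfolding economy_def by simp
  have opo_eq: "\<phi> R \<omega> i = \<phi> (R(i:=Rs)) \<omega> i"
    using opo ec sps pk unfolding own_peak_only_def by blast
  have all1: "\<forall>j. single_peaked ((R(i:=Rs)) j)" using spR sps by simp
  have all2: "\<forall>j. single_peaked ((R(i:=Rw)) j)" using spR spw by simp
  have "\<phi> (R(i:=Rw)) \<omega> i = \<omega> i" by (rule optw) (use all2 in auto)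
  then have manip: "manipulation \<phi> i Rs Rw \<omega>"
    unfolding manipulation_def using all1 st opo_eq by (intro exI[of _ "R(i:=Rs)"]) auto
  have xin: "\<phi> (R(i:=Rs)) \<omega> i \<in> option_set \<phi> i Rs \<omega>"
    unfolding option_set_def using all1 by auto
  have "\<forall>x'\<in>option_set \<phi> i Rw \<omega>. \<exists>x\<in>option_set \<phi> i Rs \<omega>. strict Rs (ennreal x') (ennreal x)"
  proof
    fix x' assume "x' \<in> option_set \<phi> i Rw \<omega>"
    then have "x' = \<omega> i" unfolding option_set_def using optw by auto
    then show "\<exists>x\<in>option_set \<phi> i Rs \<omega>. strict Rs (ennreal x') (ennreal x)"
      using xin st opo_eq by auto
  qed
  with manip have "obvious_manipulation \<phi> i Rs Rw \<omega>" unfolding obvious_manipulation_def by simp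
  then show False using nom ep sps spw unfolding NOM_def by blast
qed

lemma vpref_strict_right:
  assumes "0 \<le> f" "f < q" "q < w"
  shows "strict (vpref q (2 * (w - f) / (q - f) + 2) 1) (ennreal w) (ennreal f)"
proof -
  define c where "c = 2 * (w - f) / (q - f) + 2"
  have c: "c * (q - f) = 2 * (w - f) + 2 * (q - f)" using assms unfolding c_def
    by (simp add: field_simps)
  have c0: "0 \<le> c" using assms unfolding c_def by simp
  have "c * max (q - w) 0 + 1 * w < c * max (q - f) 0 + 1 * f"
    using assms c by (simp add: max_def)
  then show ?thesis using assms c0 unfolding strict_def vpref_def c_def[symmetric]
    by (simp add: vg_real ennreal_less_iff del: ennreal_plus)
qed

lemma vpref_strict_left:
  assumes "0 \<le> w" "w < q" "q < f"
  shows "strict (vpref q ((1 + (f - w) / (q - w)) / 2) 1) (ennreal w) (ennreal f)"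
proof -
  define c where "c = (1 + (f - w) / (q - w)) / 2"
  have c: "2 * c * (q - w) = (q - w) + (f - w)" using assms unfolding c_def
    by (simp add: field_simps)
  have c0: "0 \<le> c" using assms unfolding c_def by (simp add: field_simps)
  have "c * max (q - w) 0 + 1 * w < c * max (q - f) 0 + 1 * f"
    using assms c by (simp add: max_def algebra_simps)
  then show ?thesis using assms c0 unfolding strict_def vpref_def c_def[symmetric]
    by (simp add: vg_real ennreal_less_iff del: ennreal_plus)
qed

lemma cgt_right: "0 \<le> f \<Longrightarrow> f < q \<Longrightarrow> q < w \<Longrightarrow> (1::real) < 2 * (w - f) / (q - f) + 2"
  by (simp add: field_simps)

lemma cgt_left: "0 \<le> w \<Longrightarrow> w < q \<Longrightarrow> q < f \<Longrightarrow> (1::real) < (1 + (f - w) / (q - w)) / 2"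
  by (simp add: field_simps)

lemma forward:
  fixes \<phi> :: "('n::finite) rule"
  assumes rule: "is_rule \<phi>" and opo: "own_peak_only \<phi>" and eff: "efficient \<phi>"
    and eg: "endowments_guarantee \<phi>" and nom: "NOM \<phi>"
  shows "simple_reallocation_rule \<phi>"
  unfolding simple_reallocation_rule_def
proof (rule conjI[OF opo], intro allI impI)
  fix R :: "'n \<Rightarrow> pref" and \<omega> :: "'n \<Rightarrow> real" and i :: 'n
  assume ec: "economy R \<omega>"
  define S where "S = (\<Sum>j\<in>UNIV. peak (R j))"
  define a where "a = \<phi> R \<omega> i"
  define p where "p = peak (R i)"
  define w where "w = \<omega> i"
  have a0: "0 \<le> a" using rule ec unfolding is_rule_def a_def by simp
  have w0: "0 \<le> w" using ec unfolding economy_def endowment_profile_def w_def by simp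
  have sp: "single_peaked (R i)" using ec unfolding economy_def by simp
  have pks: "peakset (R i) = {p}" using sp_basic(1)[OF sp] p_def by simp
  have G: "\<not> strict Rs (ennreal w) (ennreal a)" if "single_peaked Rs" "peakset Rs = peakset (R i)" for Rs
    using G_contra[OF rule opo eg nom ec that] unfolding a_def w_def by blast
  have le: "S \<ge> ennreal (sum \<omega> UNIV) \<Longrightarrow> ennreal a \<le> p"
    using eff_le_peak[OF rule eff ec] unfolding S_def a_def p_def by blast
  have ge: "S \<le> ennreal (sum \<omega> UNIV) \<Longrightarrow> p \<le> ennreal a"
    using eff_ge_peak[OF rule eff ec] unfolding S_def a_def p_def by blast
  show "(simple_agent R \<omega> i \<longrightarrow> ennreal (\<phi> R \<omega> i) = peak (R i)) \<and>
        (\<not> simple_agent R \<omega> i \<longrightarrow>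
           min (ennreal (\<omega> i)) (peak (R i)) \<le> ennreal (\<phi> R \<omega> i) \<and>
           ennreal (\<phi> R \<omega> i) \<le> max (ennreal (\<omega> i)) (peak (R i)))"
    unfolding a_def[symmetric] p_def[symmetric] w_def[symmetric]
  proof (rule conjI; rule impI)
    assume simp_ag: "simple_agent R \<omega> i"
    then have cs: "(S \<ge> ennreal (sum \<omega> UNIV) \<and> p < ennreal w) \<or> (S \<le> ennreal (sum \<omega> UNIV) \<and> p > ennreal w)"
      unfolding simple_agent_def S_def p_def w_def by blast
    then show "ennreal a = p"
    proof
      assume h: "S \<ge> ennreal (sum \<omega> UNIV) \<and> p < ennreal w"
      have ap: "ennreal a \<le> p" using le h by simp
      show "ennreal a = p"
      proof (rule ccontr)
        assume ne: "ennreal a \<noteq> p"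
        have "p \<noteq> top" using h by (auto simp: top_unique)
        then obtain q where q: "p = ennreal q" "0 \<le> q" by (cases p) auto
        have aq: "a < q" using ap ne q a0 by (simp add: ennreal_less_iff)
        have qw: "q < w" using h q by (simp add: ennreal_less_iff)
        define c where "c = 2 * (w - a) / (q - a) + 2"
        have spc: "single_peaked (vpref q c 1)" "peakset (vpref q c 1) = {ennreal q}"
          using vpref_sp[of q 1 c] cgt_right[OF a0 aq qw] q unfolding c_def by auto
        have "strict (vpref q c 1) (ennreal w) (ennreal a)"
          using vpref_strict_right[OF a0 aq qw] unfolding c_def by simp
        then show False using G[OF spc(1)] spc(2) pks q by simp
      qed
    next
      assume h: "S \<le> ennreal (sum \<omega> UNIV) \<and> p > ennreal w"
      have ap: "p \<le> ennreal a" using ge h by simp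
      show "ennreal a = p"
      proof (rule ccontr)
        assume ne: "ennreal a \<noteq> p"
        have "p \<noteq> top" using ap by (auto simp: top_unique)
        then obtain q where q: "p = ennreal q" "0 \<le> q" by (cases p) auto
        have aq: "q < a" using ap ne q a0 by (simp add: ennreal_less_iff)
        have qw: "w < q" using h q w0 by (simp add: ennreal_less_iff)
        define c where "c = (1 + (a - w) / (q - w)) / 2"
        have spc: "single_peaked (vpref q c 1)" "peakset (vpref q c 1) = {ennreal q}"
          using vpref_sp[of q 1 c] cgt_left[OF w0 qw aq] q unfolding c_def by auto
        have "strict (vpref q c 1) (ennreal w) (ennreal a)"
          using vpref_strict_left[OF w0 qw aq] unfolding c_def by simp
        then show False using G[OF spc(1)] spc(2) pks q by simp
      qed
    qed
  next
    assume ns: "\<not> simple_agent R \<omega> i"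
    have GR: "\<not> strict (R i) (ennreal w) (ennreal a)" using G[OF sp] by simp
    show "min (ennreal w) p \<le> ennreal a \<and> ennreal a \<le> max (ennreal w) p"
    proof (cases "S \<ge> ennreal (sum \<omega> UNIV)")
      case True
      then have wp: "ennreal w \<le> p" using ns unfolding simple_agent_def S_def p_def w_def by (auto simp: not_less)
      have ap: "ennreal a \<le> p" using le True by simp
      have "w \<le> a"
      proof (rule ccontr)
        assume "\<not> w \<le> a"
        then have "ennreal a < ennreal w \<and> ennreal w \<le> p" using wp w0 a0 by (simp add: ennreal_less_iff)
        then have "strict (R i) (ennreal w) (ennreal a)" using sp_basic(2)[OF sp] p_def by simp
        then show False using GR by simp
      qed
      then show ?thesis using wp ap a0 by (simp add: min_def max_def ennreal_leI)
    next
      case False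
      then have S: "S \<le> ennreal (sum \<omega> UNIV)" by simp
      then have wp: "p \<le> ennreal w" using ns unfolding simple_agent_def S_def p_def w_def by (auto simp: not_less)
      have ap: "p \<le> ennreal a" using ge S by simp
      have "a \<le> w"
      proof (rule ccontr)
        assume "\<not> a \<le> w"
        then have "p \<le> ennreal w \<and> ennreal w < ennreal a" using wp w0 a0 by (simp add: ennreal_less_iff)
        then have "strict (R i) (ennreal w) (ennreal a)" using sp_basic(2)[OF sp] p_def by simp
        then show False using GR by simp
      qed
      then show ?thesis using wp ap w0 by (auto simp: min_def max_def)
    qed
  qed
qed

lemma sr_bounds:
  fixes \<phi> :: "('n::finite) rule"
  assumes sr: "simple_reallocation_rule \<phi>" and ec: "economy R \<omega>"
  shows "min (ennreal (\<omega> i)) (peak (R i)) \<le> ennreal (\<phi> R \<omega> i) \<and>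
         ennreal (\<phi> R \<omega> i) \<le> max (ennreal (\<omega> i)) (peak (R i))"
  using sr ec unfolding simple_reallocation_rule_def
  by (cases "simple_agent R \<omega> i") auto

lemma eq_of_le_sum:
  fixes a x :: "'n::finite \<Rightarrow> real"
  assumes "\<And>j. a j \<le> x j" "sum a UNIV = sum x UNIV"
  shows "x = a"
proof -
  have "sum (\<lambda>j. x j - a j) UNIV = 0" using assms(2) by (simp add: sum_subtractf)
  then have "\<forall>j\<in>UNIV. x j - a j = 0" using assms(1) by (subst sum_nonneg_eq_0_iff[symmetric]) auto
  then show ?thesis by auto
qed

lemma backward_eff:
  fixes \<phi> :: "('n::finite) rule"
  assumes rule: "is_rule \<phi>" and sr: "simple_reallocation_rule \<phi>"
  shows "efficient \<phi>"
  unfolding efficient_def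
proof (intro allI impI notI)
  fix R :: "'n \<Rightarrow> pref" and \<omega> :: "'n \<Rightarrow> real"
  assume ec: "economy R \<omega>"
  assume "\<exists>x::'n \<Rightarrow> real. (\<forall>i. 0 \<le> x i) \<and> sum x UNIV = sum \<omega> UNIV \<and>
            (\<forall>i. R i (ennreal (x i)) (ennreal (\<phi> R \<omega> i))) \<and>
            (\<exists>i. strict (R i) (ennreal (x i)) (ennreal (\<phi> R \<omega> i)))"
  then obtain x i where x0: "\<forall>i. 0 \<le> x i" and xs: "sum x UNIV = sum \<omega> UNIV"
    and xR: "\<forall>i. R i (ennreal (x i)) (ennreal (\<phi> R \<omega> i))"
    and xi: "strict (R i) (ennreal (x i)) (ennreal (\<phi> R \<omega> i))" by blast
  define a where "a = \<phi> R \<omega>"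
  have a0: "\<And>l. 0 \<le> a l" and asum: "sum a UNIV = sum \<omega> UNIV"
    using rule ec unfolding is_rule_def a_def by auto
  have sp: "\<And>l. single_peaked (R l)" using ec unfolding economy_def by auto
  define S where "S = (\<Sum>j\<in>UNIV. peak (R j))"
  have "x = a"
  proof (cases "S \<ge> ennreal (sum \<omega> UNIV)")
    case True
    have ap: "ennreal (a j) \<le> peak (R j)" for j
    proof (cases "simple_agent R \<omega> j")
      case True then show ?thesis using sr ec unfolding simple_reallocation_rule_def a_def by auto
    next
      case False
      then have "ennreal (\<omega> j) \<le> peak (R j)" using \<open>S \<ge> _\<close> unfolding simple_agent_def S_def by auto
      then show ?thesis using sr_bounds[OF sr ec, of j] unfolding a_def by simp
    qed
    have "a j \<le> x j" for j
    proof (rule ccontr)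
      assume "\<not> a j \<le> x j"
      then have "ennreal (x j) < ennreal (a j) \<and> ennreal (a j) \<le> peak (R j)"
        using ap[of j] x0 a0 by (simp add: ennreal_less_iff)
      then have "strict (R j) (ennreal (a j)) (ennreal (x j))" using sp_basic(2)[OF sp[of j]] by simp
      then show False using xR unfolding strict_def a_def by blast
    qed
    then show "x = a" using eq_of_le_sum[of a x] xs asum by simp
  next
    case False
    then have S: "S \<le> ennreal (sum \<omega> UNIV)" by simp
    have ap: "peak (R j) \<le> ennreal (a j)" for j
    proof (cases "simple_agent R \<omega> j")
      case True then show ?thesis using sr ec unfolding simple_reallocation_rule_def a_def by auto
    next
      case False
      then have "peak (R j) \<le> ennreal (\<omega> j)" using S unfolding simple_agent_def S_def by auto
      then show ?thesis using sr_bounds[OF sr ec, of j] unfolding a_def by simp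
    qed
    have "x j \<le> a j" for j
    proof (rule ccontr)
      assume "\<not> x j \<le> a j"
      then have "peak (R j) \<le> ennreal (a j) \<and> ennreal (a j) < ennreal (x j)"
        using ap[of j] x0 a0 by (simp add: ennreal_less_iff)
      then have "strict (R j) (ennreal (a j)) (ennreal (x j))" using sp_basic(2)[OF sp[of j]] by simp
      then show False using xR unfolding strict_def a_def by blast
    qed
    then show "x = a" using eq_of_le_sum[of x a] xs asum by simp
  qed
  then show False using xi unfolding strict_def a_def by simp
qed

lemma backward_eg:
  fixes \<phi> :: "('n::finite) rule"
  assumes rule: "is_rule \<phi>" and sr: "simple_reallocation_rule \<phi>"
  shows "endowments_guarantee \<phi>"
  unfolding endowments_guarantee_def
proof (intro allI impI)
  fix R :: "'n \<Rightarrow> pref" and \<omega> :: "'n \<Rightarrow> real" and i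
  assume ec: "economy R \<omega>" and pk: "peak (R i) = ennreal (\<omega> i)"
  have a0: "0 \<le> \<phi> R \<omega> i" using rule ec unfolding is_rule_def by auto
  have w0: "0 \<le> \<omega> i" using ec unfolding economy_def endowment_profile_def by simp
  have sp: "single_peaked (R i)" using ec unfolding economy_def by auto
  have "ennreal (\<phi> R \<omega> i) = ennreal (\<omega> i)"
    using sr_bounds[OF sr ec, of i] pk by (simp add: antisym)
  then have "\<phi> R \<omega> i = \<omega> i" using a0 w0 by simp
  then show "indiff (R i) (ennreal (\<phi> R \<omega> i)) (ennreal (\<omega> i))"
    unfolding indiff_def using sp_basic(3)[OF sp] by simp
qed

lemma backward_nom:
  fixes \<phi> :: "('n::finite) rule"
  assumes rule: "is_rule \<phi>" and sr: "simple_reallocation_rule \<phi>"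
  shows "NOM \<phi>"
  unfolding NOM_def
proof (intro allI impI)
  fix \<omega> :: "'n \<Rightarrow> real" and i Ri Ri'
  assume ep: "endowment_profile \<omega>" and spi: "single_peaked Ri" and spi': "single_peaked Ri'"
  have w0: "\<And>j. 0 \<le> \<omega> j" using ep unfolding endowment_profile_def by simp
  define R0 where "R0 = (\<lambda>j. vpref (\<omega> j) 2 1)(i := Ri')"
  have sp0: "\<forall>j. single_peaked (R0 j)" using vpref_sp(1)[of _ 1 2] w0 spi' unfolding R0_def by simp
  have ec0: "economy R0 \<omega>" using sp0 ep unfolding economy_def by simp
  have oth: "\<phi> R0 \<omega> j = \<omega> j" if "j \<noteq> i" for j
  proof -
    have "peak (R0 j) = ennreal (\<omega> j)" using that vpref_peak[of "\<omega> j" 1 2] w0 unfolding R0_def by simp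
    then have "ennreal (\<phi> R0 \<omega> j) = ennreal (\<omega> j)"
      using sr_bounds[OF sr ec0, of j] by (simp add: antisym)
    moreover have "0 \<le> \<phi> R0 \<omega> j" using rule ec0 unfolding is_rule_def by simp
    ultimately show ?thesis using w0 by simp
  qed
  have "sum (\<phi> R0 \<omega>) UNIV = sum \<omega> UNIV" using rule ec0 unfolding is_rule_def by simp
  moreover have "sum (\<phi> R0 \<omega>) UNIV = \<phi> R0 \<omega> i + sum (\<phi> R0 \<omega>) (UNIV - {i})"
    by (simp add: sum.remove)
  moreover have "sum \<omega> UNIV = \<omega> i + sum \<omega> (UNIV - {i})"
    by (simp add: sum.remove)
  moreover have "sum (\<phi> R0 \<omega>) (UNIV - {i}) = sum \<omega> (UNIV - {i})"
    using oth by (intro sum.cong) auto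
  ultimately have "\<phi> R0 \<omega> i = \<omega> i" by simp
  moreover have "R0 i = Ri'" unfolding R0_def by simp
  ultimately have win: "\<omega> i \<in> option_set \<phi> i Ri' \<omega>"
    unfolding option_set_def using sp0 by force
  have "\<not> strict Ri (ennreal (\<omega> i)) (ennreal x)" if xin: "x \<in> option_set \<phi> i Ri \<omega>" for x
  proof -
    obtain R where R: "\<forall>j. single_peaked (R j)" "R i = Ri" "x = \<phi> R \<omega> i"
      using xin unfolding option_set_def by blast
    have ec: "economy R \<omega>" using R ep unfolding economy_def by simp
    have x0: "0 \<le> x" using rule ec R(3) unfolding is_rule_def by simp
    have b: "min (ennreal (\<omega> i)) (peak Ri) \<le> ennreal x \<and> ennreal x \<le> max (ennreal (\<omega> i)) (peak Ri)"
      using sr_bounds[OF sr ec, of i] R by simp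
    have "(peak Ri \<le> ennreal x \<and> x \<le> \<omega> i) \<or> (\<omega> i \<le> x \<and> ennreal x \<le> peak Ri)"
    proof (cases "peak Ri \<le> ennreal (\<omega> i)")
      case True
      then have "min (ennreal (\<omega> i)) (peak Ri) = peak Ri" "max (ennreal (\<omega> i)) (peak Ri) = ennreal (\<omega> i)"
        by (simp_all add: min_absorb2 max_absorb1)
      then show ?thesis using b w0[of i] x0 by simp
    next
      case False
      then have "min (ennreal (\<omega> i)) (peak Ri) = ennreal (\<omega> i)" "max (ennreal (\<omega> i)) (peak Ri) = peak Ri"
        by (simp_all add: min_absorb1 max_absorb2)
      then show ?thesis using b w0[of i] x0 by simp
    qed
    then have "Ri (ennreal x) (ennreal (\<omega> i))" using sp_weak[OF spi x0 w0[of i]] by simp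
    then show ?thesis unfolding strict_def by simp
  qed
  then show "\<not> obvious_manipulation \<phi> i Ri Ri' \<omega>"
    unfolding obvious_manipulation_def using win by blast
qed

theorem proposition3:
  fixes \<phi> :: "('n::finite \<Rightarrow> pref) \<Rightarrow> ('n \<Rightarrow> real) \<Rightarrow> 'n \<Rightarrow> real"
  assumes "is_rule \<phi>"
  shows "(own_peak_only \<phi> \<and> efficient \<phi> \<and> endowments_guarantee \<phi> \<and> NOM \<phi>)
           \<longleftrightarrow> simple_reallocation_rule \<phi>"
  using forward[OF assms] backward_eff[OF assms] backward_eg[OF assms] backward_nom[OF assms]
  unfolding simple_reallocation_rule_def by blast

end
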